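(* Fix $q\in[1,\infty)$ and let $(\mathcal X,d)$ be a metric space with the $q$-barycenter property (for every $\boldsymbol w\in\Delta^{K-1}$ and $\boldsymbol c\in\mathcal X^K$, $C\mapsto\sum_sw_sd^q(c_s,C)$ attains its minimum). Let $\boldsymbol a=(a_1,\dots,a_K)\in\mathcal X^K$, $\boldsymbol w\in\Delta^{K-1}$, $\alpha\in[0,1]$, and $C_{\boldsymbol a}\in\arg\min_C\sum_sw_sd^q(a_s,C)$. Assume $\boldsymbol b=(b_1,\dots,b_K)\in\mathcal X^K$ satisfies, for all $s$, $d(a_s,C_{\boldsymbol a})=d(a_s,b_s)+d(b_s,C_{\boldsymbol a})$ and $d(b_s,a_s)=(1-\alpha^{1/q})d(a_s,C_{\boldsymbol a})$. Let $C_{\boldsymbol b}\in\arg\min_C\sum_sw_sd^q(b_s,C)$. Then $$\Big\{\sum_{s=1}^Kw_sd^q(b_s,C_{\boldsymbol b})\Big\}^{1/q}=\Big\{\sum_{s=1}^Kw_sd^q(b_s,C_{\boldsymbol a})\Big\}^{1/q}.$$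
   Context: $\Delta^{K-1}$ is the probability simplex in $\mathbb R^K$. *)

theory Defs
  imports "HOL-Analysis.Analysis"
begin

definition prob_simplex :: "nat \<Rightarrow> (nat \<Rightarrow> real) set" where
  "prob_simplex K = {w. (\<forall>s<K. 0 \<le> w s) \<and> (\<Sum>s<K. w s) = 1}"

definition bary_cost :: "real \<Rightarrow> nat \<Rightarrow> (nat \<Rightarrow> real) \<Rightarrow> (nat \<Rightarrow> 'a::metric_space) \<Rightarrow> 'a \<Rightarrow> real" where
  "bary_cost q K w c C = (\<Sum>s<K. w s * (dist (c s) C) powr q)"

definition q_barycenter_property :: "real \<Rightarrow> 'a::metric_space itself \<Rightarrow> bool" where
  "q_barycenter_property q _ \<longleftrightarrow>
     (\<forall>K w (c :: nat \<Rightarrow> 'a). w \<in> prob_simplex K \<longrightarrow>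
        (\<exists>C. \<forall>C'. bary_cost q K w c C \<le> bary_cost q K w c C'))"

definition is_barycenter :: "real \<Rightarrow> nat \<Rightarrow> (nat \<Rightarrow> real) \<Rightarrow> (nat \<Rightarrow> 'a::metric_space) \<Rightarrow> 'a \<Rightarrow> bool" where
  "is_barycenter q K w c C \<longleftrightarrow> (\<forall>C'. bary_cost q K w c C \<le> bary_cost q K w c C')"

end

theory Submission
  imports Defs
begin

lemma powr_conv_ineq:
  fixes q t x y :: real
  assumes q: "1 \<le> q" and t: "0 \<le> t" "t \<le> 1" and x: "0 \<le> x" and y: "0 \<le> y"
  shows "((1 - t) * x + t * y) powr q \<le> (1 - t) * x powr q + t * y powr q"
proof -
  have tq: "u powr q \<le> u" if "0 \<le> u" "u \<le> 1" for u :: real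
  proof (cases "u = 0")
    case True then show ?thesis by simp
  next
    case False
    then have "u powr q \<le> u powr 1" using that q by (intro powr_mono') auto
    then show ?thesis using False that by simp
  qed
  show ?thesis
  proof (cases "x = 0")
    case True
    have "(t * y) powr q = t powr q * y powr q" using t y by (simp add: powr_mult)
    also have "\<dots> \<le> t * y powr q" using tq[OF t] by (intro mult_right_mono) auto
    finally show ?thesis using True q by simp
  next
    case xF: False
    show ?thesis
    proof (cases "y = 0")
      case True
      have "((1 - t) * x) powr q = (1 - t) powr q * x powr q" using t x by (simp add: powr_mult)
      also have "\<dots> \<le> (1 - t) * x powr q" using tq[of "1-t"] t by (intro mult_right_mono) auto
      finally show ?thesis using True q by simp
    next
      case False
      have "(\<lambda>x. x powr q) ((1 - t) *\<^sub>R x + t *\<^sub>R y) \<le> (1 - t) * (\<lambda>x. x powr q) x + t * (\<lambda>x. x powr q) y"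
        by (rule convex_onD[OF powr_convex[OF q]]) (use t x y xF False in auto)
      then show ?thesis by simp
    qed
  qed
qed

theorem lemma11:
  fixes q \<alpha> :: real and K :: nat and w :: "nat \<Rightarrow> real"
    and a b :: "nat \<Rightarrow> 'a::metric_space" and Ca Cb :: 'a
  assumes "1 \<le> q"
    and "q_barycenter_property q TYPE('a)"
    and "w \<in> prob_simplex K"
    and "0 \<le> \<alpha>" and "\<alpha> \<le> 1"
    and "is_barycenter q K w a Ca"
    and "\<forall>s<K. dist (a s) Ca = dist (a s) (b s) + dist (b s) Ca"
    and "\<forall>s<K. dist (b s) (a s) = (1 - \<alpha> powr (1/q)) * dist (a s) Ca"
    and "is_barycenter q K w b Cb"
  shows "(bary_cost q K w b Cb) powr (1/q) = (bary_cost q K w b Ca) powr (1/q)"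
proof -
  define t where "t = \<alpha> powr (1/q)"
  have q: "1 \<le> q" by fact
  have t0: "0 \<le> t" using t_def by simp
  have t1: "t \<le> 1" unfolding t_def using assms(4,5) q
    by (intro powr_le1) auto
  have w0: "\<And>s. s < K \<Longrightarrow> 0 \<le> w s" using assms(3) by (simp add: prob_simplex_def)
  define A where "A = bary_cost q K w a Ca"
  have db: "dist (b s) Ca = t * dist (a s) Ca" if "s < K" for s
  proof -
    have "dist (a s) Ca = (1 - t) * dist (a s) Ca + dist (b s) Ca"
      using assms(7,8) that t_def by (simp add: dist_commute)
    then show ?thesis by (simp add: algebra_simps)
  qed
  have costCa: "bary_cost q K w b Ca = t powr q * A"
    unfolding A_def bary_cost_def sum_distrib_left
    by (rule sum.cong) (auto simp: db t0 powr_mult)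
  have key: "t powr q * A \<le> bary_cost q K w b C" for C
  proof (cases "t = 0")
    case True
    have "0 \<le> bary_cost q K w b C" unfolding bary_cost_def
      by (rule sum_nonneg) (simp add: w0)
    then show ?thesis using True q by simp
  next
    case False
    then have tp: "0 < t" using t0 by simp
    have pt: "dist (a s) C powr q \<le> (1 - t) * dist (a s) Ca powr q + t * (dist (b s) C / t) powr q"
      if s: "s < K" for s
    proof -
      have "dist (a s) C \<le> dist (a s) (b s) + dist (b s) C" by (rule dist_triangle)
      also have "\<dots> = (1 - t) * dist (a s) Ca + t * (dist (b s) C / t)"
        using assms(8) s tp by (simp add: t_def dist_commute)
      finally have "dist (a s) C powr q \<le> ((1 - t) * dist (a s) Ca + t * (dist (b s) C / t)) powr q"
        using q by (intro powr_mono2) auto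
      also have "\<dots> \<le> (1 - t) * dist (a s) Ca powr q + t * (dist (b s) C / t) powr q"
        by (rule powr_conv_ineq) (use q t0 t1 in auto)
      finally show ?thesis .
    qed
    have pt2: "(dist (b s) C / t) powr q = dist (b s) C powr q / t powr q" for s
      using tp by (simp add: powr_divide)
    have "bary_cost q K w a C \<le> (\<Sum>s<K. w s * ((1 - t) * dist (a s) Ca powr q + t * (dist (b s) C powr q / t powr q)))"
      unfolding bary_cost_def using pt pt2 w0 by (intro sum_mono mult_left_mono) auto
    also have "\<dots> = (1 - t) * A + t / t powr q * bary_cost q K w b C"
      unfolding A_def bary_cost_def sum_distrib_left sum.distrib[symmetric]
      by (rule sum.cong) (auto simp: algebra_simps)
    finally have "bary_cost q K w a C \<le> (1 - t) * A + t / t powr q * bary_cost q K w b C" .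
    moreover have "A \<le> bary_cost q K w a C" using assms(6) A_def is_barycenter_def by metis
    ultimately have "t * A \<le> t / t powr q * bary_cost q K w b C" by (simp add: algebra_simps)
    then have "t powr q * (t * A) \<le> t powr q * (t / t powr q * bary_cost q K w b C)"
      using tp by (intro mult_left_mono) auto
    then have "t * (t powr q * A) \<le> t * bary_cost q K w b C" using tp by (simp add: field_simps)
    then show ?thesis using tp by simp
  qed
  have "bary_cost q K w b Cb \<le> bary_cost q K w b Ca" using assms(9) is_barycenter_def by metis
  moreover have "bary_cost q K w b Ca \<le> bary_cost q K w b Cb" using key[of Cb] costCa by simp
  ultimately show ?thesis by simp
qed

end
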